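(* Let $L>0$, $h>0$ and let $\hat \varphi:\mathbb{R}\to\mathbb{R}$ be any function. Suppose real sequences $(v_{L,k})$, $(i_{L,k})$, $(v_{M,k})$, $(i_{M,k})$, $(q_{M,k})$, $k=0,1,2,\dots$, satisfy for all $k$: $$v_{L,k}=L\frac{i_{L,k+1}-i_{L,k}}{h},\quad v_{M,k}=\frac{\hat \varphi(q_{M,k+1})-\hat \varphi(q_{M,k})}{h},\quad q_{M,k+1}=q_{M,k}+hi_{M,k},$$ $$v_{L,k}+v_{M,k}=0,\qquad i_{L,k}=i_{M,k}.$$ Then: 1) $(i_{L,k},q_{M,k})$ is an orbit of the two-dimensional map $$i_{L,k+1}=i_{L,k}-\tfrac{1}{L}\big(\hat \varphi(q_{M,k}+hi_{L,k})-\hat \varphi(q_{M,k})\big),\qquad q_{M,k+1}=q_{M,k}+hi_{L,k}.$$ 2) For any step size $h>0$, the function $\Theta_{ML}(i_L,q_M)=Li_L+\hat\varphi(q_M)$ is a first integral of this map, i.e. $\Theta_{ML}(i_{L,k+1},q_{M,k+1})=\Theta_{ML}(i_{L,k},q_{M,k})$ for all $k\ge0$ along every orbit. 3) Consequently $\mathbb{R}^2$ is foliated into the invariant sets $\mathcal{M}_{ML}(\Phi_0)=\{(i_L,q_M)\in\mathbb{R}^2: Li_L+\hat\varphi(q_M)=\Phi_0\}$, $\Phi_0\in\mathbb{R}$, and along any orbit of the map lying in $\mathcal{M}_{ML}(\Phi_0)$ the variable $q_{M,k}$ obeys the one-dimensional map $$q_{M,k+1}=q_{M,k}-\frac{h}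{L}\hat\varphi(q_{M,k})+\frac{h}{L}\Phi_0.$$
   Context: These equations model a discrete-time circuit of a linear inductor (inductance $L$, voltage $v_L$, current $i_L$) connected to an ideal charge-controlled memristor with constitutive relation $\varphi_M=\hat\varphi(q_M)$ (voltage $v_M$, current $i_M$, charge $q_M$), discretized with step size $h$; the last two equations are Kirchhoff's voltage and current laws. *)

theory Defs
  imports Complex_Main
begin

definition LM_map :: "real \<Rightarrow> real \<Rightarrow> (real \<Rightarrow> real) \<Rightarrow> real \<times> real \<Rightarrow> real \<times> real" where
  "LM_map L h phi p = (fst p - (phi (snd p + h * fst p) - phi (snd p)) / L, snd p + h * fst p)"

definition Theta_ML :: "real \<Rightarrow> (real \<Rightarrow> real) \<Rightarrow> real \<times> real \<Rightarrow> real" where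
  "Theta_ML L phi p = L * fst p + phi (snd p)"

definition M_ML :: "real \<Rightarrow> (real \<Rightarrow> real) \<Rightarrow> real \<Rightarrow> (real \<times> real) set" where
  "M_ML L phi Phi0 = {(i, q). L * i + phi q = Phi0}"

end

theory Submission
  imports Defs
begin

theorem proposition2:
  fixes L h :: real and phi :: "real \<Rightarrow> real"
    and vL iL vM iM qM :: "nat \<Rightarrow> real"
  assumes L_pos: "L > 0" and h_pos: "h > 0"
    and eqL: "\<And>k. vL k = L * (iL (Suc k) - iL k) / h"
    and eqM: "\<And>k. vM k = (phi (qM (Suc k)) - phi (qM k)) / h"
    and eqq: "\<And>k. qM (Suc k) = qM k + h * iM k"
    and KVL: "\<And>k. vL k + vM k = 0"
    and KCL: "\<And>k. iL k = iM k"
  shows "(\<forall>k. (iL (Suc k), qM (Suc k)) = LM_map L h phi (iL k, qM k))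
    \<and> (\<forall>x :: nat \<Rightarrow> real \<times> real. (\<forall>k. x (Suc k) = LM_map L h phi (x k)) \<longrightarrow>
          (\<forall>k. Theta_ML L phi (x (Suc k)) = Theta_ML L phi (x k)))
    \<and> (\<forall>p :: real \<times> real. \<exists>!Phi0. p \<in> M_ML L phi Phi0)
    \<and> (\<forall>Phi0 p. p \<in> M_ML L phi Phi0 \<longrightarrow> LM_map L h phi p \<in> M_ML L phi Phi0)
    \<and> (\<forall>Phi0 (x :: nat \<Rightarrow> real \<times> real).
          (\<forall>k. x (Suc k) = LM_map L h phi (x k)) \<and> (\<forall>k. x k \<in> M_ML L phi Phi0) \<longrightarrow>
          (\<forall>k. snd (x (Suc k)) = snd (x k) - h / L * phi (snd (x k)) + h / L * Phi0))"
proof -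
  have Ldiv: "L * (a / L) = a" for a using L_pos by simp
  have A: "\<forall>k. (iL (Suc k), qM (Suc k)) = LM_map L h phi (iL k, qM k)"
  proof
    fix k
    have q: "qM (Suc k) = qM k + h * iL k" using eqq KCL by simp
    have "L * (iL (Suc k) - iL k) / h + (phi (qM (Suc k)) - phi (qM k)) / h = 0"
      using KVL[of k] eqL[of k] eqM[of k] by simp
    hence "L * (iL (Suc k) - iL k) + (phi (qM (Suc k)) - phi (qM k)) = 0"
      using h_pos by (simp add: add_divide_distrib[symmetric])
    hence "iL (Suc k) = iL k - (phi (qM (Suc k)) - phi (qM k)) / L"
      using L_pos by (simp add: field_simps)
    thus "(iL (Suc k), qM (Suc k)) = LM_map L h phi (iL k, qM k)"
      using q by (simp add: LM_map_def)
  qed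
  have B: "\<forall>x :: nat \<Rightarrow> real \<times> real. (\<forall>k. x (Suc k) = LM_map L h phi (x k)) \<longrightarrow>
          (\<forall>k. Theta_ML L phi (x (Suc k)) = Theta_ML L phi (x k))"
  proof (intro allI impI)
    fix x :: "nat \<Rightarrow> real \<times> real" and k
    assume "\<forall>k. x (Suc k) = LM_map L h phi (x k)"
    hence xs: "x (Suc k) = LM_map L h phi (x k)" by blast
    obtain i q where xk: "x k = (i, q)" by fastforce
    have "Theta_ML L phi (x (Suc k)) = L * (i - (phi (q + h * i) - phi q) / L) + phi (q + h * i)"
      unfolding xs xk by (simp add: LM_map_def Theta_ML_def)
    also have "\<dots> = L * i + phi q" using Ldiv[of "phi (q + h * i) - phi q"] by (simp only: right_diff_distrib)
    finally show "Theta_ML L phi (x (Suc k)) = Theta_ML L phi (x k)"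
      unfolding xk by (simp add: Theta_ML_def)
  qed
  have C: "\<forall>p :: real \<times> real. \<exists>!Phi0. p \<in> M_ML L phi Phi0"
    by (auto simp: M_ML_def)
  have D: "\<forall>Phi0 p. p \<in> M_ML L phi Phi0 \<longrightarrow> LM_map L h phi p \<in> M_ML L phi Phi0"
  proof (intro allI impI)
    fix Phi0 and p :: "real \<times> real"
    assume "p \<in> M_ML L phi Phi0"
    obtain i q where p: "p = (i, q)" by fastforce
    have "L * (i - (phi (q + h * i) - phi q) / L) + phi (q + h * i) = L * i + phi q"
      using Ldiv[of "phi (q + h * i) - phi q"] by (simp only: right_diff_distrib)
    thus "LM_map L h phi p \<in> M_ML L phi Phi0"
      using \<open>p \<in> M_ML L phi Phi0\<close> unfolding p by (simp add: M_ML_def LM_map_def)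
  qed
  have E: "\<forall>Phi0 (x :: nat \<Rightarrow> real \<times> real).
          (\<forall>k. x (Suc k) = LM_map L h phi (x k)) \<and> (\<forall>k. x k \<in> M_ML L phi Phi0) \<longrightarrow>
          (\<forall>k. snd (x (Suc k)) = snd (x k) - h / L * phi (snd (x k)) + h / L * Phi0)"
  proof (intro allI impI)
    fix Phi0 and x :: "nat \<Rightarrow> real \<times> real" and k
    assume H: "(\<forall>k. x (Suc k) = LM_map L h phi (x k)) \<and> (\<forall>k. x k \<in> M_ML L phi Phi0)"
    obtain i q where xk: "x k = (i, q)" by fastforce
    have "L * i + phi q = Phi0" proof - have "x k \<in> M_ML L phi Phi0" using H by blast thus ?thesis unfolding xk M_ML_def by simp qed
    hence "i = (Phi0 - phi q) / L" using L_pos by (simp add: field_simps)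
    moreover have "snd (x (Suc k)) = q + h * i" using H xk by (simp add: LM_map_def)
    ultimately have "snd (x (Suc k)) = q + h * ((Phi0 - phi q) / L)" by simp
    also have "\<dots> = q - h / L * phi q + h / L * Phi0"
      by (simp add: diff_divide_distrib right_diff_distrib)
    finally show "snd (x (Suc k)) = snd (x k) - h / L * phi (snd (x k)) + h / L * Phi0"
      using xk by simp
  qed
  show ?thesis using A B C D E by blast
qed

end
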